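(* Let $X=X_1\times\cdots\times X_n$ be a finite product space, $\theta:X\to\mathbb{R}\cup\{-\infty\}$ a potential function and $Z=\sum_{x\in X}\exp(\theta(x))$. Let $\mathcal{A}$ be a finite nonempty family of subsets $\alpha\subseteq\{1,\dots,n\}$, and for $\alpha\in\mathcal{A}$ let $x_\alpha=(x_i)_{i\in\alpha}$. Assume the random variables $\gamma_\alpha(x_\alpha)$, over all $\alpha\in\mathcal{A}$ and all assignments $x_\alpha$, are i.i.d. following the zero-mean Gumbel distribution. Then for every $\alpha\in\mathcal{A}$, $$\log Z\ge E_\gamma\Big[\max_x\big\{\theta(x)+\gamma_\alpha(x_\alpha)\big\}\Big].$$ In particular, $\log Z\ge E_\gamma\Big[\max_x\big\{\theta(x)+\frac{1}{|\mathcal{A}|}\sum_{\alpha\in\mathcal{A}}\gamma_\alpha(x_\alpha)\big\}\Big]$.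
   Context: The zero-mean Gumbel distribution is the distribution with cumulative distribution function $F(t)=\exp(-\exp(-(t+c)))$, where $c$ is the Euler constant. *)

theory Defs
  imports "HOL-Probability.Probability"
begin

definition gumbel0_cdf :: "real \<Rightarrow> real" where
  "gumbel0_cdf t = exp (- exp (- (t + euler_mascheroni)))"

end

theory Submission imports Defs "HOL-Probability.Probability"
begin

lemma Gamma_lborel:
  fixes x :: real assumes x: "x > 0"
  shows "integrable lborel (\<lambda>t. indicator {0<..} t * (t powr (x-1) * exp (-t)))"
    "integral\<^sup>L lborel (\<lambda>t. indicator {0<..} t * (t powr (x-1) * exp (-t))) = Gamma x"
proof -
  have h: "((\<lambda>t. t powr (x - 1) / exp t) has_integral Gamma x) {0..}"
    by (rule Gamma_integral_real[OF x])
  have ai: "(\<lambda>t. t powr (x - 1) / exp t) absolutely_integrable_on {0..}"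
    by (rule nonnegative_absolutely_integrable_1) (use h in auto)
  have si: "set_integrable lborel {0..} (\<lambda>t. t powr (x - 1) / exp t)"
    using ai unfolding set_integrable_def
    by (subst (asm) integrable_completion) auto
  have eq: "(\<lambda>t. indicator {0..} t *\<^sub>R (t powr (x - 1) / exp t)) = (\<lambda>t. indicator {0<..} t * (t powr (x-1) * exp (-t)))"
    by (auto simp: indicator_def fun_eq_iff exp_minus field_simps)
  show "integrable lborel (\<lambda>t. indicator {0<..} t * (t powr (x-1) * exp (-t)))"
    using si unfolding set_integrable_def eq .
  have "(LINT t:{0..}|lborel. t powr (x - 1) / exp t) = Gamma x"
    using set_borel_integral_eq_integral(2)[OF si] h by (simp add: integral_unique)
  then show "integral\<^sup>L lborel (\<lambda>t. indicator {0<..} t * (t powr (x-1) * exp (-t))) = Gamma x"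
    unfolding set_lebesgue_integral_def eq .
qed

lemma abs_ln_bound:
  fixes t :: real assumes t: "t > 0"
  shows "\<bar>ln t\<bar> \<le> 2 * t powr (1/2 - 1) + t powr (2 - 1)"
proof (cases "t \<ge> 1")
  case True
  then have "ln t \<le> t - 1" using ln_le_minus_one t by blast
  moreover have "0 \<le> ln t" using True by simp
  moreover have "0 \<le> t powr (1/2 - 1)" by simp
  moreover have "t powr (2-1) = t" using t by simp
  ultimately show ?thesis using t by linarith
next
  case False
  have "ln (t powr (-1/2)) \<le> t powr (-1/2) - 1"
    by (rule ln_le_minus_one) (use t in simp)
  moreover have "ln (t powr (-1/2)) = - ln t / 2" using t by (simp add: ln_powr)
  moreover have "ln t \<le> 0" using False t by simp
  ultimately show ?thesis using t by simp
qed

lemma ln_exp_integral: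
  shows "integrable lborel (\<lambda>t::real. indicator {0<..} t * (ln t * exp (-t)))"
    "- euler_mascheroni \<le> integral\<^sup>L lborel (\<lambda>t::real. indicator {0<..} t * (ln t * exp (-t)))"
proof -
  let ?g = "\<lambda>x t. indicator {0<..} t * (t powr (x-1) * exp (-t)) :: real"
  have gi: "\<And>x. x > 0 \<Longrightarrow> integrable lborel (?g x)" using Gamma_lborel(1) by blast
  have gI: "\<And>x. x > 0 \<Longrightarrow> integral\<^sup>L lborel (?g x) = Gamma x" using Gamma_lborel(2) by blast
  have bi: "integrable lborel (\<lambda>t. 2 * ?g (1/2) t + ?g 2 t)"
    using gi[of "1/2"] gi[of 2] by simp
  show li: "integrable lborel (\<lambda>t::real. indicator {0<..} t * (ln t * exp (-t)))"
  proof (rule Bochner_Integration.integrable_bound[OF bi])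
    show "(\<lambda>t::real. indicator {0<..} t * (ln t * exp (-t))) \<in> borel_measurable lborel" by measurable
    show "AE t in lborel. norm (indicator {0<..} t * (ln t * exp (-t))) \<le> norm (2 * ?g (1/2) t + ?g 2 t)"
    proof (rule AE_I2)
      fix t :: real
      show "norm (indicator {0<..} t * (ln t * exp (-t))) \<le> norm (2 * ?g (1/2) t + ?g 2 t)"
      proof (cases "t > 0")
        case True
        have "\<bar>ln t\<bar> * exp (-t) \<le> (2 * t powr (1/2 - 1) + t powr (2 - 1)) * exp (-t)"
          by (rule mult_right_mono[OF abs_ln_bound[OF True]]) simp
        then show ?thesis using True by (simp add: abs_mult algebra_simps)
      qed (simp add: indicator_def)
    qed
  qed
  let ?I = "integral\<^sup>L lborel (\<lambda>t::real. indicator {0<..} t * (ln t * exp (-t)))"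
  have key: "(Gamma (1 + h) - 1) / h \<le> ?I" if h: "-1 < h" "h < 0" for h :: real
  proof -
    have "integral\<^sup>L lborel (\<lambda>t. ?g 1 t + h * (indicator {0<..} t * (ln t * exp (-t))))
          \<le> integral\<^sup>L lborel (?g (1 + h))"
    proof (rule integral_mono)
      show "integrable lborel (\<lambda>t. ?g 1 t + h * (indicator {0<..} t * (ln t * exp (-t))))"
        using gi[of 1] li by simp
      show "integrable lborel (?g (1 + h))" using gi[of "1+h"] h by simp
      fix t :: real
      show "?g 1 t + h * (indicator {0<..} t * (ln t * exp (-t))) \<le> ?g (1 + h) t"
      proof (cases "t > 0")
        case True
        have "1 + h * ln t \<le> exp (h * ln t)" by (rule exp_ge_add_one_self)
        also have "exp (h * ln t) = t powr h" using True by (simp add: powr_def)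
        finally have "(1 + h * ln t) * exp (-t) \<le> t powr h * exp (-t)"
          by (rule mult_right_mono) simp
        then show ?thesis using True by (simp add: algebra_simps)
      qed (simp add: indicator_def)
    qed
    also have "\<dots> = Gamma (1 + h)" using gI[of "1+h"] h by simp
    finally have "1 + h * ?I \<le> Gamma (1 + h)"
      using gi[of 1] li gI[of 1] by simp
    then show ?thesis using h by (simp add: field_simps)
  qed
  have "(Gamma has_field_derivative Gamma 1 * Digamma 1) (at (1::real))"
    by (rule has_field_derivative_Gamma) (auto elim!: nonpos_Ints_cases)
  then have "((\<lambda>h. (Gamma (1 + h) - Gamma 1) / h) \<longlongrightarrow> Gamma (1::real) * Digamma 1) (at 0)"
    by (rule DERIV_D)
  then have lim: "((\<lambda>h. (Gamma (1 + h) - 1) / h) \<longlongrightarrow> - euler_mascheroni) (at_left (0::real))"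
    by (simp add: filterlim_at_split)
  show "- euler_mascheroni \<le> ?I"
  proof (rule tendsto_upperbound[OF lim])
    show "\<forall>\<^sub>F h in at_left 0. (Gamma (1 + h) - 1) / h \<le> ?I"
      unfolding eventually_at_left_field
      by (rule exI[of _ "-1"]) (auto intro: key)
  qed simp
qed


abbreviation "EXP \<equiv> density lborel (exponential_density (1::real))"

lemma EXP_prob: "prob_space EXP"
  by (rule prob_space_exponential_density) simp

lemma EXP_distributed: "distributed EXP lborel (\<lambda>x. x) (exponential_density 1)"
  unfolding distributed_def by (auto simp: distr_id2)

lemma EXP_gt: "a \<ge> 0 \<Longrightarrow> measure EXP {t. a < t} = exp (- a)"
  using prob_space.exponential_distributedD_gt[OF EXP_prob EXP_distributed, of a] by simp

lemma cdf_gumbel_EXP: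
  "cdf (distr EXP borel (\<lambda>t. - ln t - euler_mascheroni)) = gumbel0_cdf"
proof
  fix x :: real
  define a where "a = exp (- (x + euler_mascheroni))"
  have a: "a > 0" by (simp add: a_def)
  have "cdf (distr EXP borel (\<lambda>t. - ln t - euler_mascheroni)) x
      = measure EXP {t. - ln t - euler_mascheroni \<le> x}"
    by (simp add: cdf_def measure_distr vimage_def)
  also have "\<dots> = measure EXP {t. a < t}"
  proof (rule measure_eq_AE)
    have "AE t in lborel. t \<noteq> 0 \<and> t \<noteq> a" using AE_lborel_singleton[of 0] AE_lborel_singleton[of a]
      by eventually_elim auto
    then show "AE t in EXP. (t \<in> {t. - ln t - euler_mascheroni \<le> x}) = (t \<in> {t. a < t})"
    proof (subst AE_density, simp, eventually_elim)
      case (elim t)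
      show ?case
      proof
        assume "0 < ennreal (exponential_density 1 t)"
        then have t: "t > 0" using elim by (auto simp: exponential_density_def split: if_splits)
        have "(- ln t - euler_mascheroni \<le> x) \<longleftrightarrow> ln a \<le> ln t" by (auto simp: a_def)
        also have "\<dots> \<longleftrightarrow> a \<le> t" using a t by simp
        finally show "(t \<in> {t. - ln t - euler_mascheroni \<le> x}) = (t \<in> {t. a < t})" using elim by auto
      qed
    qed
  qed auto
  also have "\<dots> = gumbel0_cdf x" using a by (simp add: EXP_gt gumbel0_cdf_def a_def)
  finally show "cdf (distr EXP borel (\<lambda>t. - ln t - euler_mascheroni)) x = gumbel0_cdf x" .
qed

lemma EXP_ln:
  "integrable EXP (\<lambda>t. ln t)" "- euler_mascheroni \<le> integral\<^sup>L EXP (\<lambda>t. ln t)"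
proof -
  have eq: "(\<lambda>t. exponential_density 1 t *\<^sub>R ln t) = (\<lambda>t::real. indicator {0<..} t * (ln t * exp (-t)))"
    by (auto simp: exponential_density_def fun_eq_iff indicator_def)
  have nn: "AE t in lborel. 0 \<le> exponential_density (1::real) t"
    by (auto simp: exponential_density_def)
  show "integrable EXP (\<lambda>t. ln t)"
    by (subst integrable_density) (use nn ln_exp_integral(1) eq in auto)
  have "integral\<^sup>L EXP (\<lambda>t. ln t) = integral\<^sup>L lborel (\<lambda>t::real. indicator {0<..} t * (ln t * exp (-t)))"
    by (subst integral_density) (use nn eq in auto)
  then show "- euler_mascheroni \<le> integral\<^sup>L EXP (\<lambda>t. ln t)" using ln_exp_integral(2) by simp
qed

lemma gumbel_mean:
  assumes P: "prob_space M" and W[measurable]: "W \<in> borel_measurable M"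
    and c: "cdf (distr M borel W) = gumbel0_cdf"
  shows "integrable M W" "integral\<^sup>L M W \<le> 0"
proof -
  interpret P: prob_space M by (rule P)
  interpret E: prob_space EXP by (rule EXP_prob)
  let ?g = "\<lambda>t::real. - ln t - euler_mascheroni"
  have gm[measurable]: "?g \<in> borel_measurable EXP" by simp
  have deq: "distr M borel W = distr EXP borel ?g"
    by (rule cdf_unique) (auto simp: c cdf_gumbel_EXP)
  have gi: "integrable EXP ?g" using EXP_ln(1) by simp
  have "integrable M W \<longleftrightarrow> integrable (distr M borel W) (\<lambda>x. x)"
    by (subst integrable_distr_eq) auto
  also have "\<dots> \<longleftrightarrow> integrable EXP ?g"
    unfolding deq by (subst integrable_distr_eq) auto
  finally show "integrable M W" using gi by simp
  have "integral\<^sup>L M W = integral\<^sup>L (distr M borel W) (\<lambda>x. x)"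
    by (subst integral_distr) auto
  also have "\<dots> = integral\<^sup>L EXP ?g"
    unfolding deq by (subst integral_distr) auto
  also have "\<dots> = - integral\<^sup>L EXP (\<lambda>t. ln t) - euler_mascheroni"
    using EXP_ln(1) E.prob_space by (simp add: Bochner_Integration.integral_diff)
  also have "\<dots> \<le> 0" using EXP_ln(2) by simp
  finally show "integral\<^sup>L M W \<le> 0" .
qed

lemma gumbel_max:
  fixes X :: "'b \<Rightarrow> 'w \<Rightarrow> real" and b :: "'b \<Rightarrow> real"
  assumes P: "prob_space M" and S: "finite S" "S \<noteq> {}"
    and meas[measurable]: "\<And>y. y \<in> S \<Longrightarrow> X y \<in> borel_measurable M"
    and cdfX: "\<And>y. y \<in> S \<Longrightarrow> cdf (distr M borel (X y)) = gumbel0_cdf"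
    and ind: "\<And>s. measure M (\<Inter>y\<in>S. {\<omega>\<in>space M. X y \<omega> \<le> s y})
                   = (\<Prod>y\<in>S. measure M {\<omega>\<in>space M. X y \<omega> \<le> s y})"
  shows "integrable M (\<lambda>\<omega>. Max ((\<lambda>y. b y + X y \<omega>) ` S))"
    "integral\<^sup>L M (\<lambda>\<omega>. Max ((\<lambda>y. b y + X y \<omega>) ` S)) \<le> ln (\<Sum>y\<in>S. exp (b y))"
proof -
  interpret P: prob_space M by (rule P)
  define L where "L = ln (\<Sum>y\<in>S. exp (b y))"
  have Spos: "(\<Sum>y\<in>S. exp (b y)) > 0" using S by (intro sum_pos) auto
  have expL: "exp L = (\<Sum>y\<in>S. exp (b y))" using Spos by (simp add: L_def)
  define W where "W = (\<lambda>\<omega>. Max ((\<lambda>y. b y + X y \<omega>) ` S) - L)"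
  have Wm: "W \<in> borel_measurable M" unfolding W_def using S
    by (intro borel_measurable_diff borel_measurable_Max borel_measurable_add) auto
  have cX: "measure M {\<omega>\<in>space M. X y \<omega> \<le> s} = gumbel0_cdf s" if "y \<in> S" for y s
  proof -
    have "measure M {\<omega>\<in>space M. X y \<omega> \<le> s} = cdf (distr M borel (X y)) s"
      using that by (simp add: cdf_def measure_distr vimage_def Int_def conj_commute)
    then show ?thesis using cdfX[OF that] by simp
  qed
  have "cdf (distr M borel W) t = gumbel0_cdf t" for t
  proof -
    have "cdf (distr M borel W) t = measure M {\<omega>\<in>space M. W \<omega> \<le> t}"
      using Wm by (simp add: cdf_def measure_distr vimage_def Int_def conj_commute)
    also have "{\<omega>\<in>space M. W \<omega> \<le> t} = (\<Inter>y\<in>S. {\<omega>\<in>space M. X y \<omega> \<le> t + L - b y})"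
      using S by (auto simp: W_def Max_le_iff le_diff_eq diff_le_eq add.commute)
    also have "measure M \<dots> = (\<Prod>y\<in>S. measure M {\<omega>\<in>space M. X y \<omega> \<le> t + L - b y})"
      by (rule ind)
    also have "\<dots> = (\<Prod>y\<in>S. exp (- (exp (- (t + euler_mascheroni)) * exp (-L) * exp (b y))))"
    proof (intro prod.cong refl)
      fix y assume y: "y \<in> S"
      have "exp (- (t + L - b y + euler_mascheroni)) = exp (- (t + euler_mascheroni)) * exp (-L) * exp (b y)"
        by (simp add: algebra_simps flip: exp_add)
      then show "measure M {\<omega>\<in>space M. X y \<omega> \<le> t + L - b y}
          = exp (- (exp (- (t + euler_mascheroni)) * exp (-L) * exp (b y)))"
        using cX[OF y] by (simp add: gumbel0_cdf_def)
    qed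
    also have "\<dots> = exp (\<Sum>y\<in>S. - (exp (- (t + euler_mascheroni)) * exp (-L) * exp (b y)))"
      using S by (simp add: exp_sum)
    also have "\<dots> = exp (- (exp (- (t + euler_mascheroni)) * exp (-L) * exp L))"
      by (simp add: sum_negf sum_distrib_left expL)
    also have "\<dots> = gumbel0_cdf t" by (simp add: gumbel0_cdf_def flip: exp_add)
    finally show ?thesis .
  qed
  then have cW: "cdf (distr M borel W) = gumbel0_cdf" by auto
  have eq: "(\<lambda>\<omega>. Max ((\<lambda>y. b y + X y \<omega>) ` S)) = (\<lambda>\<omega>. W \<omega> + L)" by (simp add: W_def)
  show "integrable M (\<lambda>\<omega>. Max ((\<lambda>y. b y + X y \<omega>) ` S))"
    unfolding eq using gumbel_mean(1)[OF P Wm cW] by simp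
  have "integral\<^sup>L M (\<lambda>\<omega>. W \<omega> + L) = integral\<^sup>L M W + L"
    using gumbel_mean(1)[OF P Wm cW] P.prob_space by simp
  then show "integral\<^sup>L M (\<lambda>\<omega>. Max ((\<lambda>y. b y + X y \<omega>) ` S)) \<le> ln (\<Sum>y\<in>S. exp (b y))"
    unfolding eq using gumbel_mean(2)[OF P Wm cW] by (simp add: L_def)
qed

lemma integrable_Max_fam:
  fixes f :: "'i \<Rightarrow> 'w \<Rightarrow> real"
  assumes "finite I" "I \<noteq> {}" "\<And>i. i \<in> I \<Longrightarrow> integrable M (f i)"
  shows "integrable M (\<lambda>\<omega>. Max ((\<lambda>i. f i \<omega>) ` I))"
  using assms
proof (induction I rule: finite_ne_induct)
  case (singleton x)
  then show ?case by simp
next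
  case (insert x F)
  have "integrable M (\<lambda>\<omega>. max (f x \<omega>) (Max ((\<lambda>i. f i \<omega>) ` F)))"
    using insert by (intro integrable_max) auto
  then show ?case using insert by simp
qed

lemma single_alpha:
  fixes t :: "(nat \<Rightarrow> 'a) \<Rightarrow> real" and \<gamma> :: "(nat \<Rightarrow> 'a) \<Rightarrow> 'w \<Rightarrow> real"
  assumes P: "prob_space M" and D: "finite D" "D \<noteq> {}"
    and DY: "\<And>x. x \<in> D \<Longrightarrow> restrict x \<alpha> \<in> Y"
    and meas: "\<And>y. y \<in> Y \<Longrightarrow> \<gamma> y \<in> borel_measurable M"
    and cdfY: "\<And>y. y \<in> Y \<Longrightarrow> cdf (distr M borel (\<gamma> y)) = gumbel0_cdf"
    and ind: "\<And>T s. T \<subseteq> Y \<Longrightarrow> T \<noteq> {} \<Longrightarrow> finite T \<Longrightarrow>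
                measure M (\<Inter>y\<in>T. {\<omega>\<in>space M. \<gamma> y \<omega> \<le> s y})
                   = (\<Prod>y\<in>T. measure M {\<omega>\<in>space M. \<gamma> y \<omega> \<le> s y})"
  shows "integrable M (\<lambda>\<omega>. Max ((\<lambda>x. t x + \<gamma> (restrict x \<alpha>) \<omega>) ` D))"
    "integral\<^sup>L M (\<lambda>\<omega>. Max ((\<lambda>x. t x + \<gamma> (restrict x \<alpha>) \<omega>) ` D)) \<le> ln (\<Sum>x\<in>D. exp (t x))"
proof -
  interpret P: prob_space M by (rule P)
  define S where "S = (\<lambda>x. restrict x \<alpha>) ` D"
  define b where "b = (\<lambda>y. ln (\<Sum>x\<in>{x\<in>D. restrict x \<alpha> = y}. exp (t x)))"
  have S: "finite S" "S \<noteq> {}" "S \<subseteq> Y" using D DY by (auto simp: S_def)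
  have gi: "integrable M (\<gamma> y)" if "y \<in> Y" for y
    using gumbel_mean(1)[OF P meas[OF that] cdfY[OF that]] .
  show li: "integrable M (\<lambda>\<omega>. Max ((\<lambda>x. t x + \<gamma> (restrict x \<alpha>) \<omega>) ` D))"
    using D DY gi by (intro integrable_Max_fam) auto
  have gm: "integrable M (\<lambda>\<omega>. Max ((\<lambda>y. b y + \<gamma> y \<omega>) ` S))"
    "integral\<^sup>L M (\<lambda>\<omega>. Max ((\<lambda>y. b y + \<gamma> y \<omega>) ` S)) \<le> ln (\<Sum>y\<in>S. exp (b y))"
    using gumbel_max[OF P S(1,2), of \<gamma> b] S meas cdfY ind[OF S(3) S(2) S(1)] by auto
  have tb: "t x \<le> b (restrict x \<alpha>)" if "x \<in> D" for x
  proof -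
    have "exp (t x) \<le> (\<Sum>x'\<in>{x'\<in>D. restrict x' \<alpha> = restrict x \<alpha>}. exp (t x'))"
      using that D by (intro member_le_sum) auto
    then have "ln (exp (t x)) \<le> b (restrict x \<alpha>)" unfolding b_def
      by (subst ln_le_cancel_iff) (auto intro: less_le_trans[OF exp_gt_zero])
    then show ?thesis by simp
  qed
  have "integral\<^sup>L M (\<lambda>\<omega>. Max ((\<lambda>x. t x + \<gamma> (restrict x \<alpha>) \<omega>) ` D))
      \<le> integral\<^sup>L M (\<lambda>\<omega>. Max ((\<lambda>y. b y + \<gamma> y \<omega>) ` S))"
  proof (rule integral_mono[OF li gm(1)])
    fix \<omega>
    show "Max ((\<lambda>x. t x + \<gamma> (restrict x \<alpha>) \<omega>) ` D) \<le> Max ((\<lambda>y. b y + \<gamma> y \<omega>) ` S)"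
    proof (subst Max_le_iff, simp_all add: D, intro ballI)
      fix x assume x: "x \<in> D"
      have "t x + \<gamma> (restrict x \<alpha>) \<omega> \<le> b (restrict x \<alpha>) + \<gamma> (restrict x \<alpha>) \<omega>"
        using tb[OF x] by simp
      also have "\<dots> \<le> Max ((\<lambda>y. b y + \<gamma> y \<omega>) ` S)"
        using S x by (intro Max_ge) (auto simp: S_def)
      finally show "t x + \<gamma> (restrict x \<alpha>) \<omega> \<le> Max ((\<lambda>y. b y + \<gamma> y \<omega>) ` S)" .
    qed
  qed
  also have "\<dots> \<le> ln (\<Sum>y\<in>S. exp (b y))" by (rule gm(2))
  also have "(\<Sum>y\<in>S. exp (b y)) = (\<Sum>y\<in>S. \<Sum>x\<in>{x\<in>D. restrict x \<alpha> = y}. exp (t x))"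
  proof (rule sum.cong[OF refl])
    fix y assume "y \<in> S"
    then have "(\<Sum>x\<in>{x\<in>D. restrict x \<alpha> = y}. exp (t x)) > 0"
      using D by (intro sum_pos) (auto simp: S_def)
    then show "exp (b y) = (\<Sum>x\<in>{x\<in>D. restrict x \<alpha> = y}. exp (t x))" by (simp add: b_def)
  qed
  also have "\<dots> = (\<Sum>x\<in>D. exp (t x))"
    using D S by (intro sum.group) (auto simp: S_def)
  finally show "integral\<^sup>L M (\<lambda>\<omega>. Max ((\<lambda>x. t x + \<gamma> (restrict x \<alpha>) \<omega>) ` D)) \<le> ln (\<Sum>x\<in>D. exp (t x))" .
qed

theorem corollary1:
  fixes n :: nat and Xs :: "nat \<Rightarrow> 'a set" and \<theta> :: "(nat \<Rightarrow> 'a) \<Rightarrow> ereal"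
    and \<A> :: "nat set set" and M :: "'w measure"
    and \<gamma> :: "nat set \<Rightarrow> (nat \<Rightarrow> 'a) \<Rightarrow> 'w \<Rightarrow> real"
  defines "D \<equiv> {x \<in> PiE {1..n} Xs. \<theta> x \<noteq> -\<infinity>}"
  assumes fin: "\<forall>i\<in>{1..n}. finite (Xs i)"
    and pot: "\<forall>x\<in>PiE {1..n} Xs. \<theta> x \<noteq> \<infinity>"
    and nontriv: "D \<noteq> {}"
    and A: "finite \<A>" "\<A> \<noteq> {}" "\<forall>\<alpha>\<in>\<A>. \<alpha> \<subseteq> {1..n}"
    and P: "prob_space M"
    and indep: "prob_space.indep_vars M (\<lambda>_. borel) (\<lambda>(\<alpha>, y). \<gamma> \<alpha> y) (SIGMA \<alpha>:\<A>. PiE \<alpha> Xs)"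
    and gumbel: "\<forall>\<alpha>\<in>\<A>. \<forall>y\<in>PiE \<alpha> Xs. cdf (distr M borel (\<gamma> \<alpha> y)) = gumbel0_cdf"
  shows "(\<forall>\<alpha>\<in>\<A>. ln (\<Sum>x\<in>D. exp (real_of_ereal (\<theta> x)))
            \<ge> (\<integral>\<omega>. Max ((\<lambda>x. real_of_ereal (\<theta> x) + \<gamma> \<alpha> (restrict x \<alpha>) \<omega>) ` D) \<partial>M))
       \<and> ln (\<Sum>x\<in>D. exp (real_of_ereal (\<theta> x)))
            \<ge> (\<integral>\<omega>. Max ((\<lambda>x. real_of_ereal (\<theta> x)
                   + (1 / real (card \<A>)) * (\<Sum>\<alpha>\<in>\<A>. \<gamma> \<alpha> (restrict x \<alpha>) \<omega>)) ` D) \<partial>M)"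
proof -
  interpret P: prob_space M by (rule P)
  let ?t = "\<lambda>x. real_of_ereal (\<theta> x)"
  let ?Z = "\<Sum>x\<in>D. exp (?t x)"
  have "finite (PiE {1..n} Xs)" using fin by (intro finite_PiE) auto
  then have Dfin: "finite D" by (rule rev_finite_subset) (auto simp: D_def)
  have meas: "\<gamma> \<alpha> y \<in> borel_measurable M" if "\<alpha> \<in> \<A>" "y \<in> PiE \<alpha> Xs" for \<alpha> y
    using indep that unfolding P.indep_vars_def by auto
  have cdfs: "cdf (distr M borel (\<gamma> \<alpha> y)) = gumbel0_cdf" if "\<alpha> \<in> \<A>" "y \<in> PiE \<alpha> Xs" for \<alpha> y
    using gumbel that by auto
  have ind: "measure M (\<Inter>y\<in>T. {\<omega>\<in>space M. \<gamma> \<alpha> y \<omega> \<le> s y})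
                   = (\<Prod>y\<in>T. measure M {\<omega>\<in>space M. \<gamma> \<alpha> y \<omega> \<le> s y})"
    if a: "\<alpha> \<in> \<A>" and T: "T \<subseteq> PiE \<alpha> Xs" "T \<noteq> {}" "finite T" for \<alpha> T s
  proof -
    have h: "P.prob (\<Inter>i\<in>Pair \<alpha> ` T. (\<lambda>(\<alpha>, y). \<gamma> \<alpha> y) i -` (\<lambda>(a, y). {..s y}) i \<inter> space M)
        = (\<Prod>i\<in>Pair \<alpha> ` T. P.prob ((\<lambda>(\<alpha>, y). \<gamma> \<alpha> y) i -` (\<lambda>(a, y). {..s y}) i \<inter> space M))"
      by (rule P.indep_varsD[OF indep]) (use a T in auto)
    have e: "\<And>y. \<gamma> \<alpha> y -` {..s y} \<inter> space M = {\<omega>\<in>space M. \<gamma> \<alpha> y \<omega> \<le> s y}" by auto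
    have e2: "(\<Inter>i\<in>Pair \<alpha> ` T. (\<lambda>(\<alpha>, y). \<gamma> \<alpha> y) i -` (\<lambda>(a, y). {..s y}) i \<inter> space M)
       = (\<Inter>y\<in>T. {\<omega>\<in>space M. \<gamma> \<alpha> y \<omega> \<le> s y})" using T(2) by auto
    show ?thesis using h unfolding e2 by (simp add: prod.reindex inj_on_def e)
  qed
  have DY: "restrict x \<alpha> \<in> PiE \<alpha> Xs" if "x \<in> D" "\<alpha> \<in> \<A>" for x \<alpha>
    using that A(3) by (auto simp: D_def PiE_iff)
  have part1: "integrable M (\<lambda>\<omega>. Max ((\<lambda>x. ?t x + \<gamma> \<alpha> (restrict x \<alpha>) \<omega>) ` D))
     \<and> integral\<^sup>L M (\<lambda>\<omega>. Max ((\<lambda>x. ?t x + \<gamma> \<alpha> (restrict x \<alpha>) \<omega>) ` D)) \<le> ln ?Z"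
    if a: "\<alpha> \<in> \<A>" for \<alpha>
    using single_alpha[OF P Dfin nontriv, of \<alpha> "PiE \<alpha> Xs" "\<gamma> \<alpha>" ?t] DY[OF _ a] meas[OF a]
      cdfs[OF a] ind[OF a] by blast
  have gi: "integrable M (\<gamma> \<alpha> y)" if "\<alpha> \<in> \<A>" "y \<in> PiE \<alpha> Xs" for \<alpha> y
    using gumbel_mean(1)[OF P meas[OF that] cdfs[OF that]] .
  define k where "k = real (card \<A>)"
  have k: "k > 0" using A by (simp add: k_def card_gt_0_iff)
  define F where "F = (\<lambda>\<alpha> \<omega>. Max ((\<lambda>x. ?t x + \<gamma> \<alpha> (restrict x \<alpha>) \<omega>) ` D))"
  have li: "integrable M (\<lambda>\<omega>. Max ((\<lambda>x. ?t x + (1 / real (card \<A>)) * (\<Sum>\<alpha>\<in>\<A>. \<gamma> \<alpha> (restrict x \<alpha>) \<omega>)) ` D))"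
  proof (rule integrable_Max_fam[OF Dfin nontriv])
    fix x assume x: "x \<in> D"
    have "integrable M (\<lambda>\<omega>. \<Sum>\<alpha>\<in>\<A>. \<gamma> \<alpha> (restrict x \<alpha>) \<omega>)"
      using x by (auto intro!: Bochner_Integration.integrable_sum gi DY)
    then show "integrable M (\<lambda>\<omega>. ?t x + (1 / real (card \<A>)) * (\<Sum>\<alpha>\<in>\<A>. \<gamma> \<alpha> (restrict x \<alpha>) \<omega>))"
      by simp
  qed
  have ri: "integrable M (\<lambda>\<omega>. (1 / k) * (\<Sum>\<alpha>\<in>\<A>. F \<alpha> \<omega>))"
    using part1 by (intro integrable_mult_right integrable_sum) (auto simp: F_def)
  have "integral\<^sup>L M (\<lambda>\<omega>. Max ((\<lambda>x. ?t x + (1 / real (card \<A>)) * (\<Sum>\<alpha>\<in>\<A>. \<gamma> \<alpha> (restrict x \<alpha>) \<omega>)) ` D))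
      \<le> integral\<^sup>L M (\<lambda>\<omega>. (1 / k) * (\<Sum>\<alpha>\<in>\<A>. F \<alpha> \<omega>))"
  proof (rule integral_mono[OF li ri])
    fix \<omega>
    show "Max ((\<lambda>x. ?t x + (1 / real (card \<A>)) * (\<Sum>\<alpha>\<in>\<A>. \<gamma> \<alpha> (restrict x \<alpha>) \<omega>)) ` D)
       \<le> (1 / k) * (\<Sum>\<alpha>\<in>\<A>. F \<alpha> \<omega>)"
    proof (rule Max.boundedI)
      show "finite ((\<lambda>x. ?t x + (1 / real (card \<A>)) * (\<Sum>\<alpha>\<in>\<A>. \<gamma> \<alpha> (restrict x \<alpha>) \<omega>)) ` D)"
        using Dfin by simp
      show "(\<lambda>x. ?t x + (1 / real (card \<A>)) * (\<Sum>\<alpha>\<in>\<A>. \<gamma> \<alpha> (restrict x \<alpha>) \<omega>)) ` D \<noteq> {}"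
        using nontriv by simp
      fix v assume "v \<in> (\<lambda>x. ?t x + (1 / real (card \<A>)) * (\<Sum>\<alpha>\<in>\<A>. \<gamma> \<alpha> (restrict x \<alpha>) \<omega>)) ` D"
      then obtain x where x: "x \<in> D" and v: "v = ?t x + (1 / real (card \<A>)) * (\<Sum>\<alpha>\<in>\<A>. \<gamma> \<alpha> (restrict x \<alpha>) \<omega>)"
        by blast
      have "?t x + (1 / real (card \<A>)) * (\<Sum>\<alpha>\<in>\<A>. \<gamma> \<alpha> (restrict x \<alpha>) \<omega>)
          = (1 / k) * (\<Sum>\<alpha>\<in>\<A>. ?t x + \<gamma> \<alpha> (restrict x \<alpha>) \<omega>)"
        using k by (simp add: sum.distrib k_def field_simps)
      also have "\<dots> \<le> (1 / k) * (\<Sum>\<alpha>\<in>\<A>. F \<alpha> \<omega>)"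
        using k x Dfin by (intro mult_left_mono sum_mono) (auto simp: F_def intro!: Max_ge)
      finally show "v \<le> (1 / k) * (\<Sum>\<alpha>\<in>\<A>. F \<alpha> \<omega>)" unfolding v .
    qed
  qed
  also have "\<dots> = (1 / k) * (\<Sum>\<alpha>\<in>\<A>. integral\<^sup>L M (F \<alpha>))"
  proof -
    have "integral\<^sup>L M (\<lambda>\<omega>. \<Sum>\<alpha>\<in>\<A>. F \<alpha> \<omega>) = (\<Sum>\<alpha>\<in>\<A>. integral\<^sup>L M (F \<alpha>))"
      by (rule Bochner_Integration.integral_sum) (use part1 in \<open>auto simp: F_def\<close>)
    then show ?thesis by simp
  qed
  also have "\<dots> \<le> (1 / k) * (\<Sum>\<alpha>\<in>\<A>. ln ?Z)"
    using part1 k by (intro mult_left_mono sum_mono) (auto simp: F_def)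
  also have "\<dots> = ln ?Z" using k by (simp add: k_def)
  finally show ?thesis using part1 by blast
qed

end
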